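(* Let $s:\mathbb{R}\to\mathbb{R}$ be continuous and not a polynomial. Let $F:[0,1]^d\to\mathbb{R}$ be of the form $F(\boldsymbol{x})=\sum_{i=1}^N\psi_i(\boldsymbol{a}_i^\top\boldsymbol{x}+b_i)$ with $N\ge1$, $\boldsymbol{a}_i\in\mathbb{R}^d$, $b_i\in\mathbb{R}$ and $\psi_i\in C^1(\mathbb{R})$. Then for every $\epsilon>0$ there exist $M\ge1$, $\boldsymbol{W}\in\mathbb{R}^{M\times d}$, $\boldsymbol{c}\in\mathbb{R}^M$, diagonal matrices $\boldsymbol{U},\boldsymbol{V}\in\mathbb{R}^{M\times M}$ and $\boldsymbol{\beta}\in\mathbb{R}^M$ such that $$\sup_{\boldsymbol{x}\in[0,1]^d}\big\|\nabla F(\boldsymbol{x})-\boldsymbol{W}^\top\boldsymbol{U}\,s\big(\boldsymbol{V}(\boldsymbol{W}\boldsymbol{x}+\boldsymbol{c})+\boldsymbol{\beta}\big)\big\|<\epsilon,$$ where $s$ is applied elementwise. Each such approximator is of the form $\boldsymbol{W}^\top\sigma(\boldsymbol{W}\boldsymbol{x}+\boldsymbol{c})$ with a continuous elementwise activation $\sigma$ and is the gradient of a $C^1$ function on $\mathbb{R}^d$.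
   Context: $C^1(\mathbb{R})$ denotes continuously differentiable functions $\mathbb{R}\to\mathbb{R}$. An elementwise activation $\sigma:\mathbb{R}^M\to\mathbb{R}^M$ has the form $\sigma(\boldsymbol{z})=(\sigma_1(z_1),\dots,\sigma_M(z_M))$ with scalar functions $\sigma_j$. $\|\cdot\|$ is the Euclidean norm. *)

theory Defs
  imports "HOL-Analysis.Analysis" "HOL-Computational_Algebra.Polynomial"
begin

definition is_polynomial_fun :: "(real \<Rightarrow> real) \<Rightarrow> bool" where
  "is_polynomial_fun s \<longleftrightarrow> (\<exists>p :: real poly. \<forall>x. s x = poly p x)"

definition unit_cube :: "(real ^ 'd) set" where
  "unit_cube = {x. \<forall>i. 0 \<le> x $ i \<and> x $ i \<le> 1}"

text \<open>The approximator  W^T U s(V(Wx+c)+beta)  with W having rows w j (j < M),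
  c the vector (c j), U = diag(u j), V = diag(v j), beta = (beta j).\<close>
definition grad_net ::
  "(real \<Rightarrow> real) \<Rightarrow> nat \<Rightarrow> (nat \<Rightarrow> real ^ 'd) \<Rightarrow> (nat \<Rightarrow> real) \<Rightarrow> (nat \<Rightarrow> real)
   \<Rightarrow> (nat \<Rightarrow> real) \<Rightarrow> (nat \<Rightarrow> real) \<Rightarrow> real ^ 'd \<Rightarrow> real ^ 'd" where
  "grad_net s M w c u v \<beta> x =
     (\<Sum>j<M. (u j * s (v j * (w j \<bullet> x + c j) + \<beta> j)) *\<^sub>R w j)"

end

theory Submission
  imports Defs
begin


definition net :: "(real\<Rightarrow>real) \<Rightarrow> (real\<times>real\<times>real) list \<Rightarrow> real \<Rightarrow> real" where
  "net s ps t = sum_list (map (\<lambda>(u, v, \<beta>). u * s (v * t + \<beta>)) ps)"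

definition approx :: "(real\<Rightarrow>real) \<Rightarrow> (real\<Rightarrow>real) \<Rightarrow> bool" where
  "approx s f \<longleftrightarrow> (\<forall>A B e. e > 0 \<longrightarrow> (\<exists>ps. \<forall>t\<in>{A..B}. \<bar>f t - net s ps t\<bar> < e))"

lemma net_append[simp]: "net s (ps@qs) t = net s ps t + net s qs t"
  by (simp add: net_def)

lemma net_Nil[simp]: "net s [] t = 0"
  by (simp add: net_def)

lemma net_scale: "net s (map (\<lambda>(u,v,\<beta>). (c*u,v,\<beta>)) ps) t = c * net s ps t"
  by (induction ps) (auto simp: net_def algebra_simps)

lemma net_reparam: "net s (map (\<lambda>(u,v,\<beta>). (u, v * a, v * b+\<beta>)) ps) t = net s ps (a*t+b)"
  by (induction ps) (auto simp: net_def algebra_simps)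

lemma approx_s: "approx s s"
  unfolding approx_def
  by (intro allI impI exI[of _ "[(1,1,0)]"]) (auto simp: net_def)

lemma approx_zero: "approx s (\<lambda>t. 0)"
  unfolding approx_def by (intro allI impI exI[of _ "[]"]) auto

lemma approx_add:
  assumes "approx s f" "approx s g" shows "approx s (\<lambda>t. f t + g t)"
  unfolding approx_def
proof (intro allI impI)
  fix A B e :: real assume e: "e > 0"
  obtain ps where ps: "\<forall>t\<in>{A..B}. \<bar>f t - net s ps t\<bar> < e/2"
    using assms(1) e unfolding approx_def by (meson half_gt_zero)
  obtain qs where qs: "\<forall>t\<in>{A..B}. \<bar>g t - net s qs t\<bar> < e/2"
    using assms(2) e unfolding approx_def by (meson half_gt_zero)
  show "\<exists>ps. \<forall>t\<in>{A..B}. \<bar>f t + g t - net s ps t\<bar> < e"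
  proof (intro exI[of _ "ps@qs"] ballI)
    fix t assume "t \<in> {A..B}"
    with ps qs have "\<bar>f t - net s ps t\<bar> < e/2" "\<bar>g t - net s qs t\<bar> < e/2" by auto
    moreover have "f t + g t - net s (ps@qs) t = (f t - net s ps t) + (g t - net s qs t)" by simp
    ultimately show "\<bar>f t + g t - net s (ps@qs) t\<bar> < e"
      using abs_triangle_ineq[of "f t - net s ps t" "g t - net s qs t"] by linarith
  qed
qed

lemma approx_scale:
  assumes "approx s f" shows "approx s (\<lambda>t. c * f t)"
  unfolding approx_def
proof (intro allI impI)
  fix A B e :: real assume e: "e > 0"
  have e': "e / (\<bar>c\<bar>+1) > 0" using e by auto
  obtain ps where ps: "\<forall>t\<in>{A..B}. \<bar>f t - net s ps t\<bar> < e/(\<bar>c\<bar>+1)"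
    using assms e' unfolding approx_def by blast
  show "\<exists>ps. \<forall>t\<in>{A..B}. \<bar>c * f t - net s ps t\<bar> < e"
  proof (intro exI[of _ "map (\<lambda>(u,v,\<beta>). (c*u,v,\<beta>)) ps"] ballI)
    fix t assume "t \<in> {A..B}"
    with ps have h: "\<bar>f t - net s ps t\<bar> < e/(\<bar>c\<bar>+1)" by auto
    have "\<bar>c * f t - c * net s ps t\<bar> = \<bar>c\<bar> * \<bar>f t - net s ps t\<bar>"
      by (simp add: abs_mult[symmetric] algebra_simps)
    also have "\<dots> \<le> \<bar>c\<bar> * (e/(\<bar>c\<bar>+1))" using h by (intro mult_left_mono) auto
    also have "\<dots> < e" using e by (simp add: field_simps)
    finally show "\<bar>c * f t - net s (map (\<lambda>(u,v,\<beta>). (c*u,v,\<beta>)) ps) t\<bar> < e"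
      by (simp only: net_scale)
  qed
qed

lemma approx_diff:
  assumes "approx s f" "approx s g" shows "approx s (\<lambda>t. f t - g t)"
  using approx_add[OF assms(1) approx_scale[OF assms(2), of "-1"]] by simp

lemma approx_sum:
  fixes n :: nat
  assumes "\<And>i. i < n \<Longrightarrow> approx s (f i)" shows "approx s (\<lambda>t. \<Sum>i<n. f i t)"
  using assms
proof (induction n)
  case 0 then show ?case by (simp add: approx_zero)
next
  case (Suc n) then show ?case by (simp add: approx_add)
qed

lemma approx_limit:
  assumes "\<And>A B e. e > 0 \<Longrightarrow> \<exists>g. approx s g \<and> (\<forall>t\<in>{A..B}. \<bar>f t - g t\<bar> \<le> e)"
  shows "approx s f"
  unfolding approx_def
proof (intro allI impI)
  fix A B e :: real assume e: "e > 0"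
  obtain g where g: "approx s g" "\<forall>t\<in>{A..B}. \<bar>f t - g t\<bar> \<le> e/2"
    using assms[of "e/2" A B] e by auto
  obtain ps where ps: "\<forall>t\<in>{A..B}. \<bar>g t - net s ps t\<bar> < e/2"
    using g(1) e unfolding approx_def by (meson half_gt_zero)
  show "\<exists>ps. \<forall>t\<in>{A..B}. \<bar>f t - net s ps t\<bar> < e"
  proof (intro exI[of _ ps] ballI)
    fix t assume "t \<in> {A..B}"
    with g ps have "\<bar>f t - g t\<bar> \<le> e/2" "\<bar>g t - net s ps t\<bar> < e/2" by auto
    then show "\<bar>f t - net s ps t\<bar> < e" by linarith
  qed
qed

lemma approx_reparam:
  assumes "approx s f" shows "approx s (\<lambda>t. f (a*t+b))"
  unfolding approx_def
proof (intro allI impI)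
  fix A B e :: real assume e: "e > 0"
  define R where "R = \<bar>a\<bar> * (\<bar>A\<bar>+\<bar>B\<bar>) + \<bar>b\<bar>"
  obtain ps where ps: "\<forall>t\<in>{-R..R}. \<bar>f t - net s ps t\<bar> < e"
    using assms e unfolding approx_def by blast
  show "\<exists>ps. \<forall>t\<in>{A..B}. \<bar>f (a*t+b) - net s ps t\<bar> < e"
  proof (intro exI[of _ "map (\<lambda>(u,v,\<beta>). (u, v * a, v * b+\<beta>)) ps"] ballI)
    fix t assume t: "t \<in> {A..B}"
    have "\<bar>t\<bar> \<le> \<bar>A\<bar>+\<bar>B\<bar>" using t by auto
    then have "\<bar>a\<bar>*\<bar>t\<bar> \<le> \<bar>a\<bar>*(\<bar>A\<bar>+\<bar>B\<bar>)" by (intro mult_left_mono) auto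
    then have "\<bar>a*t+b\<bar> \<le> R" unfolding R_def using abs_triangle_ineq[of "a*t" b] abs_mult[of a t] by linarith
    then have "a*t+b \<in> {-R..R}" by auto
    with ps show "\<bar>f (a*t+b) - net s (map (\<lambda>(u,v,\<beta>). (u, v * a, v * b+\<beta>)) ps) t\<bar> < e"
      by (simp add: net_reparam)
  qed
qed



lemma mvt_gen:
  fixes f f' :: "real \<Rightarrow> real"
  assumes "\<And>x. (f has_real_derivative f' x) (at x)"
  shows "\<exists>z. \<bar>z - x\<bar> \<le> \<bar>y - x\<bar> \<and> f y - f x = (y - x) * f' z"
proof (cases x y rule: linorder_cases)
  case less
  then obtain z where "x < z" "z < y" "f y - f x = (y - x) * f' z"
    using MVT2[of x y f f'] assms by auto
  then show ?thesis by (intro exI[of _ z]) auto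
next
  case equal then show ?thesis by auto
next
  case greater
  then obtain z where "y < z" "z < x" "f x - f y = (x - y) * f' z"
    using MVT2[of y x f f'] assms by auto
  then show ?thesis by (intro exI[of _ z]) (auto simp: algebra_simps)
qed

lemma approx_diffq:
  assumes ap: "approx s f" and fc: "continuous_on UNIV f"
    and G: "\<And>x. (G has_real_derivative f x) (at x)" and h: "h > 0"
  shows "approx s (\<lambda>t. (G (t+h) - G t) / h)"
proof (rule approx_limit)
  fix A B e :: real assume e: "e > 0"
  have "uniformly_continuous_on {A..B+h} f"
    by (rule compact_uniformly_continuous) (use fc in \<open>auto intro: continuous_on_subset\<close>)
  then obtain d where d: "d > 0"
    "\<And>x y. x \<in> {A..B+h} \<Longrightarrow> y \<in> {A..B+h} \<Longrightarrow> dist y x < d \<Longrightarrow> dist (f y) (f x) < e"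
    unfolding uniformly_continuous_on_def using e by metis
  obtain n :: nat where n: "h / d < n" using reals_Archimedean2 by blast
  have npos: "n > 0" using n h d by (metis divide_pos_pos of_nat_0 not_gr_zero not_less_iff_gr_or_eq)
  then have hn: "h / n < d" using n d h by (simp add: field_simps)
  define R where "R t = (\<Sum>i<n. (1/n) * f (1*t + real i * h / n))" for t
  have "approx s R"
    unfolding R_def by (intro approx_sum approx_scale approx_reparam ap)
  moreover have "\<bar>(G (t+h) - G t) / h - R t\<bar> \<le> e" if t: "t \<in> {A..B}" for t
  proof -
    define p where "p i = t + real i * h / n" for i
    have pn: "p n = t + h" "p 0 = t" using npos by (auto simp: p_def)
    have step: "\<bar>G (p (Suc i)) - G (p i) - (h/n) * f (p i)\<bar> \<le> (h/n) * e" if i: "i < n" for i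
    proof -
      have d1: "p (Suc i) - p i = h / n" using npos by (simp add: p_def field_simps)
      have "h * (1 + real i) \<le> h * real n" using i h by (intro mult_left_mono) auto
      then have pt: "p i \<ge> t" "p (Suc i) \<le> t + h"
        using i h npos by (auto simp: p_def field_simps)
      have "h / n > 0" using h npos by simp
      then have plt: "p i < p (Suc i)" using d1 by linarith
      obtain z where zz: "p i < z" "z < p (Suc i)" "G (p (Suc i)) - G (p i) = (p (Suc i) - p i) * f z"
        using MVT2[OF plt, of G f] G by blast
      have z: "\<bar>z - p i\<bar> \<le> \<bar>p (Suc i) - p i\<bar>" "G (p (Suc i)) - G (p i) = (p (Suc i) - p i) * f z"
        using zz by auto
      have "p i \<in> {A..B+h}" "z \<in> {A..B+h}" using t pt zz by auto
      moreover have "dist z (p i) < d" using z(1) d1 hn h by (simp add: dist_real_def)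
      ultimately have "\<bar>f z - f (p i)\<bar> < e" using d(2) by (auto simp: dist_real_def)
      then have "(h/n) * \<bar>f z - f (p i)\<bar> \<le> (h/n) * e" using h npos by (intro mult_left_mono) auto
      moreover have "G (p (Suc i)) - G (p i) - (h/n) * f (p i) = (h/n) * (f z - f (p i))"
        using z(2) d1 by (simp add: algebra_simps)
      moreover have "\<bar>(h/n) * (f z - f (p i))\<bar> = (h/n) * \<bar>f z - f (p i)\<bar>"
        using \<open>h / n > 0\<close> h by (simp add: abs_mult)
      ultimately show ?thesis by (simp only:)
    qed
    have "G (t+h) - G t = (\<Sum>i<n. G (p (Suc i)) - G (p i))"
      using sum_lessThan_telescope[of "\<lambda>i. G (p i)" n] pn by simp
    then have "G (t+h) - G t - h * R t = (\<Sum>i<n. G (p (Suc i)) - G (p i) - (h/n) * f (p i))"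
      by (simp add: R_def p_def sum_subtractf sum_distrib_left)
    also have "\<bar>\<dots>\<bar> \<le> (\<Sum>i<n. (h/n) * e)"
      by (rule order_trans[OF sum_abs]) (intro sum_mono step, auto)
    also have "\<dots> = h * e" using npos by simp
    finally have "\<bar>G (t+h) - G t - h * R t\<bar> \<le> h * e" .
    moreover have "(G (t+h) - G t) / h - R t = (G (t+h) - G t - h * R t) / h" using h by (simp add: field_simps)
    ultimately show ?thesis using h by (simp add: divide_le_eq abs_divide mult.commute)
  qed
  ultimately show "\<exists>g. approx s g \<and> (\<forall>t\<in>{A..B}. \<bar>(G (t+h) - G t) / h - g t\<bar> \<le> e)" by blast
qed

fun Dk :: "real \<Rightarrow> nat \<Rightarrow> (real\<Rightarrow>real) \<Rightarrow> real \<Rightarrow> real" where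
  "Dk h 0 F = F"
| "Dk h (Suc k) F = (\<lambda>t. (Dk h k F (t+h) - Dk h k F t) / h)"

lemma Dk_deriv:
  assumes "\<And>x. (F has_real_derivative F' x) (at x)"
  shows "(Dk h k F has_real_derivative Dk h k F' x) (at x)"
proof (induction k arbitrary: x)
  case 0 then show ?case using assms by simp
next
  case (Suc k)
  have g: "((\<lambda>t. t+h) has_real_derivative 1) (at x)" by (auto intro!: derivative_eq_intros)
  have d1: "((\<lambda>t. Dk h k F (t+h)) has_real_derivative Dk h k F' (x+h)) (at x)"
    using DERIV_chain2[OF Suc.IH[of "x+h"] g] by simp
  have "((\<lambda>t. (Dk h k F (t+h) - Dk h k F t) / h) has_real_derivative (Dk h k F' (x+h) - Dk h k F' x) / h) (at x)"
    by (intro DERIV_cdivide DERIV_diff d1 Suc.IH)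
  then show ?case by simp
qed

lemma Dk_cont:
  assumes "continuous_on UNIV F" shows "continuous_on UNIV (Dk h k F)"
proof (induction k)
  case 0 then show ?case using assms by simp
next
  case (Suc k)
  have "continuous_on UNIV (\<lambda>t. Dk h k F (t+h))"
    by (rule continuous_on_compose2[OF Suc]) (auto intro!: continuous_intros)
  have e: "Dk h (Suc k) F = (\<lambda>t. (Dk h k F (t+h) - Dk h k F t) * inverse h)"
    by (simp add: divide_inverse)
  show ?case unfolding e using Suc \<open>continuous_on UNIV (\<lambda>t. Dk h k F (t+h))\<close>
    by (intro continuous_intros) auto
qed



lemma chain_cont:
  assumes sc: "continuous_on UNIV (S 0)"
    and Sd: "\<And>j x. (S (Suc j) has_real_derivative S j x) (at x)"
  shows "continuous_on UNIV (S j)"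
proof (cases j)
  case 0 then show ?thesis using sc by simp
next
  case (Suc i)
  show ?thesis unfolding Suc
    by (rule continuous_at_imp_continuous_on) (use Sd DERIV_continuous in blast)
qed

lemma Dk_mvt:
  assumes Sd: "\<And>j x. (S (Suc j) has_real_derivative S j x) (at x)" and h: "h > 0"
  shows "\<exists>\<xi>. t \<le> \<xi> \<and> \<xi> \<le> t + k*h \<and> Dk h k (S k) t = S 0 \<xi>"
proof (induction k arbitrary: t)
  case 0 then show ?case by auto
next
  case (Suc k)
  have "t < t + h" using h by simp
  moreover have "\<And>x. (Dk h k (S (Suc k)) has_real_derivative Dk h k (S k) x) (at x)"
    by (rule Dk_deriv) (rule Sd)
  ultimately obtain z where z: "t < z" "z < t + h"
    "Dk h k (S (Suc k)) (t+h) - Dk h k (S (Suc k)) t = (t + h - t) * Dk h k (S k) z"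
    using MVT2[of t "t+h" "Dk h k (S (Suc k))" "Dk h k (S k)"] by blast
  obtain \<xi> where xi: "z \<le> \<xi>" "\<xi> \<le> z + k*h" "Dk h k (S k) z = S 0 \<xi>"
    using Suc.IH[of z] by blast
  have "Dk h (Suc k) (S (Suc k)) t = S 0 \<xi>" using z(3) xi(3) h by simp
  moreover have "t \<le> \<xi>" "\<xi> \<le> t + real (Suc k) * h" using z xi by (auto simp: algebra_simps)
  ultimately show ?case by blast
qed

lemma Dk_approx:
  assumes S0: "S 0 = s" and sc: "continuous_on UNIV s"
    and Sd: "\<And>j x. (S (Suc j) has_real_derivative S j x) (at x)" and h: "h > 0"
  shows "approx s (Dk h k (S k))"
proof (induction k)
  case 0 then show ?case using S0 approx_s by simp
next
  case (Suc k)
  have c: "continuous_on UNIV (Dk h k (S k))"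
    by (rule Dk_cont, rule chain_cont) (use sc S0 Sd in auto)
  have "approx s (\<lambda>t. (Dk h k (S (Suc k)) (t+h) - Dk h k (S (Suc k)) t) / h)"
    by (rule approx_diffq[OF Suc c _ h]) (rule Dk_deriv, rule Sd)
  then show ?case by simp
qed

lemma frac_le_aux: "(P::real) \<ge> 0 \<Longrightarrow> e > 0 \<Longrightarrow> P * (e / (P+1)) \<le> e"
  by (simp add: field_simps)

lemma mono_extract:
  assumes ap: "approx s (gd 0)"
    and gder: "\<And>m x. m < k \<Longrightarrow> (gd m has_real_derivative gd (Suc m) x) (at x)"
    and gc: "\<And>m. m \<le> k \<Longrightarrow> continuous_on UNIV (gd m)"
  shows "m \<le> k \<Longrightarrow> approx s (\<lambda>t. t^m * gd m (v * t+b0))"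
proof (induction m arbitrary: v)
  case 0 then show ?case using approx_reparam[OF ap] by simp
next
  case (Suc m)
  then have mk: "m < k" by simp
  show ?case
  proof (rule approx_limit)
    fix A B e :: real assume e: "e > 0"
    define C where "C = \<bar>A\<bar> + \<bar>B\<bar>"
    define R where "R = (\<bar>v\<bar>+1)*C + \<bar>b0\<bar>"
    have C0: "C \<ge> 0" by (simp add: C_def)
    have "uniformly_continuous_on (cball 0 R) (gd (Suc m))"
      by (rule compact_uniformly_continuous) (use gc[of "Suc m"] mk in \<open>auto intro: continuous_on_subset\<close>)
    moreover have e': "e / (C^(Suc m) + 1) > 0"
      using zero_le_power[OF C0, of "Suc m"] by (intro divide_pos_pos e) linarith
    ultimately obtain d where d: "d > 0"
      "\<And>x y. x \<in> cball 0 R \<Longrightarrow> y \<in> cball 0 R \<Longrightarrow> dist y x < d \<Longrightarrow>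
         dist (gd (Suc m) y) (gd (Suc m) x) < e / (C^(Suc m) + 1)"
      unfolding uniformly_continuous_on_def by metis
    define \<eta> where "\<eta> = min 1 (d / (C+1)) / 2"
    have eta: "\<eta> > 0" "\<eta> \<le> 1" "\<eta> * C < d"
    proof -
      show "\<eta> > 0" "\<eta> \<le> 1" using d C0 by (auto simp: \<eta>_def)
      have "\<eta> \<le> d / (C+1) / 2" unfolding \<eta>_def by (intro divide_right_mono) auto
      then have "\<eta> * C \<le> d / (C+1) / 2 * C" using C0 by (intro mult_right_mono) auto
      also have "\<dots> < d"
      proof -
        have "0 \<le> C*d" using C0 d(1) by simp
        then have "0 < C * d + d * 2" using d(1) by linarith
        then show ?thesis using d(1) C0 by (simp add: field_simps)
      qed
      finally show "\<eta> * C < d" .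
    qed
    define g where "g t = (1/\<eta>) * (t^m * gd m ((v+\<eta>) * t+b0) - t^m * gd m (v * t+b0))" for t
    have "approx s g"
      unfolding g_def
      by (intro approx_scale approx_diff Suc.IH) (use Suc.prems in auto)
    moreover have "\<bar>t^(Suc m) * gd (Suc m) (v * t+b0) - g t\<bar> \<le> e" if t: "t \<in> {A..B}" for t
    proof -
      have tC: "\<bar>t\<bar> \<le> C" using t by (auto simp: C_def)
      obtain z where z: "\<bar>z - (v * t+b0)\<bar> \<le> \<bar>((v+\<eta>) * t+b0) - (v * t+b0)\<bar>"
        "gd m ((v+\<eta>) * t+b0) - gd m (v * t+b0) = (((v+\<eta>) * t+b0) - (v * t+b0)) * gd (Suc m) z"
        using mvt_gen[of "gd m" "gd (Suc m)" "v * t+b0" "(v+\<eta>) * t+b0"] gder[OF mk] by blast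
      have dz: "\<bar>z - (v * t+b0)\<bar> \<le> \<eta> * \<bar>t\<bar>" using z(1) eta by (simp add: algebra_simps abs_mult)
      have "\<bar>v * t\<bar> \<le> \<bar>v\<bar> * C" using tC by (simp add: abs_mult mult_left_mono)
      then have b1: "\<bar>v * t+b0\<bar> \<le> \<bar>v\<bar> * C + \<bar>b0\<bar>" by linarith
      have "\<eta> * \<bar>t\<bar> \<le> 1 * C" using eta tC by (intro mult_mono) auto
      then have b2: "\<bar>z\<bar> \<le> \<bar>v\<bar> * C + \<bar>b0\<bar> + C" using dz b1 by linarith
      have inR: "v * t+b0 \<in> cball 0 R" "z \<in> cball 0 R" using b1 b2 C0 by (auto simp: R_def algebra_simps)
      have "\<eta> * \<bar>t\<bar> \<le> \<eta> * C" using eta tC by (intro mult_left_mono) auto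
      then have "dist z (v * t+b0) < d" using dz eta unfolding dist_real_def by linarith
      then have close: "\<bar>gd (Suc m) z - gd (Suc m) (v * t+b0)\<bar> < e / (C^(Suc m) + 1)"
        using d(2)[OF inR] by (simp add: dist_real_def)
      have "g t = t^(Suc m) * gd (Suc m) z"
        unfolding g_def using z(2) eta by (simp add: right_diff_distrib[symmetric] algebra_simps)
      then have "\<bar>t^(Suc m) * gd (Suc m) (v * t+b0) - g t\<bar> = \<bar>t^(Suc m) * (gd (Suc m) (v * t+b0) - gd (Suc m) z)\<bar>"
        by (simp add: right_diff_distrib)
      also have "\<dots> = \<bar>t\<bar>^(Suc m) * \<bar>gd (Suc m) z - gd (Suc m) (v * t+b0)\<bar>"
        by (simp only: abs_mult power_abs abs_minus_commute)
      also have "\<dots> \<le> C^(Suc m) * (e / (C^(Suc m) + 1))"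
        using close tC by (intro mult_mono power_mono) auto
      also have "\<dots> \<le> e" using frac_le_aux[OF zero_le_power[OF C0, of "Suc m"] e] .
      finally show ?thesis .
    qed
    ultimately show "\<exists>g. approx s g \<and> (\<forall>t\<in>{A..B}. \<bar>t ^ Suc m * gd (Suc m) (v * t + b0) - g t\<bar> \<le> e)"
      by blast
  qed
qed



lemma poly_limit:
  fixes c :: "nat \<Rightarrow> nat \<Rightarrow> real" and f :: "nat \<Rightarrow> real \<Rightarrow> real"
  assumes fe: "\<And>n x. f n x = (\<Sum>m<k. c n m * x^m)"
    and lim: "\<And>x. (\<lambda>n. f n x) \<longlonglongrightarrow> s x"
  shows "is_polynomial_fun s"
proof (cases "k = 0")
  case True
  have "s x = 0" for x
  proof -
    have "(\<lambda>n. f n x) \<longlonglongrightarrow> 0" using True fe by simp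
    then show ?thesis using lim LIMSEQ_unique by blast
  qed
  then show ?thesis unfolding is_polynomial_fun_def by (intro exI[of _ 0]) simp
next
  case False
  define P where "P n = (\<Sum>m<k. monom (c n m) m)" for n
  have Pe: "poly (P n) x = f n x" for n x by (simp add: P_def fe poly_sum poly_monom)
  have Pd: "degree (P n) \<le> k - 1" for n
    unfolding P_def by (rule degree_sum_le) (auto intro: order_trans[OF degree_monom_le])
  define Q where "Q i = (\<Prod>j\<in>{..<k}-{i}. [:- real j, 1:])" for i
  define L where "L i = smult (1 / (\<Prod>j\<in>{..<k}-{i}. (real i - real j))) (Q i)" for i
  have Lx: "poly (L i) (real l) = (if l = i then 1 else 0)" if "i < k" "l < k" for i l
  proof (cases "l = i")
    case True
    have "(\<Prod>j\<in>{..<k}-{i}. (real i - real j)) \<noteq> 0" by (auto simp: prod_zero_iff)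
    then show ?thesis using True by (simp add: L_def Q_def poly_prod)
  next
    case False
    have "(\<Prod>j\<in>{..<k}-{i}. poly [:- real j, 1:] (real l)) = 0"
      using False that by (intro prod_zero) auto
    then show ?thesis using False by (simp add: L_def Q_def poly_prod)
  qed
  have Ld: "degree (L i) \<le> k - 1" if "i < k" for i
  proof -
    have "degree (Q i) \<le> sum (degree \<circ> (\<lambda>j. [:- real j, 1:])) ({..<k}-{i})"
      unfolding Q_def by (rule degree_prod_sum_le) auto
    also have "\<dots> = card ({..<k}-{i})" by simp
    also have "\<dots> = k - 1" using that by simp
    finally show ?thesis unfolding L_def using degree_smult_le order_trans by blast
  qed
  have interp: "poly p x = (\<Sum>i<k. poly p (real i) * poly (L i) x)" if dp: "degree p \<le> k - 1" for p x
  proof -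
    define q where "q = p - (\<Sum>i<k. smult (poly p (real i)) (L i))"
    have dq: "degree q \<le> k - 1"
      unfolding q_def using dp
      by (intro degree_diff_le degree_sum_le order_trans[OF degree_smult_le] Ld) auto
    have rq: "poly q (real l) = 0" if "l < k" for l
    proof -
      have "(\<Sum>i<k. poly p (real i) * poly (L i) (real l)) = (\<Sum>i<k. if i = l then poly p (real l) else 0)"
        using that by (intro sum.cong) (auto simp: Lx)
      also have "\<dots> = poly p (real l)" using that by simp
      finally show ?thesis by (simp add: q_def poly_sum)
    qed
    have "q = 0"
    proof (rule ccontr)
      assume qn: "q \<noteq> 0"
      have "real ` {..<k} \<subseteq> {x. poly q x = 0}" using rq by auto
      then have "card (real ` {..<k}) \<le> card {x. poly q x = 0}"
        by (intro card_mono poly_roots_finite qn)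
      also have "\<dots> \<le> degree q" by (rule card_poly_roots_bound[OF qn])
      finally have "k \<le> degree q" by (simp add: card_image)
      then show False using dq False by linarith
    qed
    then have "poly p x = poly (\<Sum>i<k. smult (poly p (real i)) (L i)) x"
      unfolding q_def by (metis eq_iff_diff_eq_0)
    then show ?thesis by (simp add: poly_sum)
  qed
  have "s x = poly (\<Sum>i<k. smult (s (real i)) (L i)) x" for x
  proof -
    have e: "f n x = (\<Sum>i<k. f n (real i) * poly (L i) x)" for n
      using interp[OF Pd, of n x] by (simp add: Pe)
    have "(\<lambda>n. \<Sum>i<k. f n (real i) * poly (L i) x) \<longlonglongrightarrow> (\<Sum>i<k. s (real i) * poly (L i) x)"
      by (intro tendsto_sum tendsto_mult_right lim)
    then have "(\<lambda>n. f n x) \<longlonglongrightarrow> (\<Sum>i<k. s (real i) * poly (L i) x)" by (simp add: e[symmetric])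
    then have "s x = (\<Sum>i<k. s (real i) * poly (L i) x)" using lim LIMSEQ_unique by blast
    then show ?thesis by (simp add: poly_sum)
  qed
  then show ?thesis unfolding is_polynomial_fun_def by blast
qed



lemma antider:
  fixes f :: "real \<Rightarrow> real"
  assumes "continuous_on UNIV f"
  shows "\<exists>F. \<forall>x. (F has_real_derivative f x) (at x)"
proof -
  have "\<exists>F. \<forall>x :: real. (-\<infinity>::ereal) < x \<longrightarrow> x < \<infinity> \<longrightarrow> (F has_vector_derivative f x) (at x)"
    by (rule einterval_antiderivative) (use assms in \<open>auto simp: continuous_on_eq_continuous_at\<close>)
  then show ?thesis by (auto simp: has_real_derivative_iff_has_vector_derivative)
qed

lemma chain_exists:
  assumes sc: "continuous_on UNIV s"
  shows "\<exists>S. S 0 = s \<and> (\<forall>j x. (S (Suc j) has_real_derivative S j x) (at x))"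
proof -
  define S where "S = rec_nat s (\<lambda>j F. SOME G. \<forall>x. (G has_real_derivative F x) (at x))"
  have "continuous_on UNIV (S j) \<and> (\<forall>x. (S (Suc j) has_real_derivative S j x) (at x))" for j
  proof (induction j)
    case 0
    have "\<forall>x. ((SOME G. \<forall>x. (G has_real_derivative s x) (at x)) has_real_derivative s x) (at x)"
      by (rule someI_ex[OF antider[OF sc]])
    then have "\<forall>x. (S (Suc 0) has_real_derivative S 0 x) (at x)"
      unfolding S_def by simp
    then show ?case using sc by (simp add: S_def)
  next
    case (Suc j)
    have c: "continuous_on UNIV (S (Suc j))"
      by (rule continuous_at_imp_continuous_on) (use Suc DERIV_continuous in blast)
    have "\<forall>x. ((SOME G. \<forall>x. (G has_real_derivative S (Suc j) x) (at x)) has_real_derivative S (Suc j) x) (at x)"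
      by (rule someI_ex[OF antider[OF c]])
    then have "\<forall>x. (S (Suc (Suc j)) has_real_derivative S (Suc j) x) (at x)"
      unfolding S_def by simp
    then show ?case using c by simp
  qed
  moreover have "S 0 = s" by (simp add: S_def)
  ultimately show ?thesis by blast
qed

lemma nonpoly_Dk:
  assumes S0: "S 0 = s" and sc: "continuous_on UNIV s"
    and Sd: "\<And>j x. (S (Suc j) has_real_derivative S j x) (at x)"
    and np: "\<not> is_polynomial_fun s"
  shows "\<exists>h>0. \<exists>b. Dk h k s b \<noteq> 0"
proof (rule ccontr)
  assume "\<not> ?thesis"
  then have z: "\<And>h b. h > 0 \<Longrightarrow> Dk h k s b = 0" by auto
  define hh where "hh n = 1 / (real n + 1)" for n
  have hh0: "hh n > 0" for n by (simp add: hh_def)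
  define diff where "diff n m = (if m \<le> k then Dk (hh n) k (S (k-m)) else (\<lambda>_. 0))" for n m
  have dk0: "diff n k = (\<lambda>_. 0)" for n
    using z[OF hh0] S0 by (auto simp: diff_def)
  have dd: "DERIV (diff n m) x :> diff n (Suc m) x" for n m x
  proof (cases "m < k")
    case True
    then have e: "k - m = Suc (k - Suc m)" by simp
    show ?thesis using True Dk_deriv[OF Sd, of "hh n" k "k - Suc m" x] by (simp add: diff_def e)
  next
    case False
    then have "m = k \<or> m > k" by auto
    then show ?thesis
    proof
      assume "m = k" then show ?thesis using dk0 by (simp add: diff_def)
    next
      assume "m > k" then show ?thesis by (simp add: diff_def)
    qed
  qed
  define c where "c n m = diff n m 0 / fact m" for n m
  have fe: "Dk (hh n) k (S k) x = (\<Sum>m<k. c n m * x^m)" for n x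
  proof -
    obtain t where "diff n 0 x = (\<Sum>m<k. (diff n m 0 / fact m) * x ^ m) + (diff n k t / fact k) * x ^ k"
      using Maclaurin_all_le[of "diff n" "diff n 0" x k] dd by blast
    then show ?thesis using dk0 by (simp add: c_def diff_def)
  qed
  have lim: "(\<lambda>n. Dk (hh n) k (S k) x) \<longlonglongrightarrow> s x" for x
  proof (rule LIMSEQ_I)
    fix r :: real assume r: "r > 0"
    obtain d where d: "d > 0" "\<And>y. dist y x < d \<Longrightarrow> dist (s y) (s x) < r"
      using sc r unfolding continuous_on_iff by (metis UNIV_I)
    obtain no :: nat where no: "real k / d < no" using reals_Archimedean2 by blast
    show "\<exists>no. \<forall>n\<ge>no. norm (Dk (hh n) k (S k) x - s x) < r"
    proof (intro exI allI impI)
      fix n assume n: "n \<ge> no"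
      obtain \<xi> where xi: "x \<le> \<xi>" "\<xi> \<le> x + k * hh n" "Dk (hh n) k (S k) x = S 0 \<xi>"
        using Dk_mvt[of S "hh n" x k] Sd hh0 by blast
      have "real k < d * no" using no d by (simp add: field_simps)
      also have "\<dots> \<le> d * n" using n d by simp
      also have "\<dots> < d * (real n + 1)" using d by simp
      finally have "real k * hh n < d" using d by (simp add: hh_def field_simps)
      then have "dist \<xi> x < d" using xi by (simp add: dist_real_def)
      then show "norm (Dk (hh n) k (S k) x - s x) < r" using d(2) xi S0 by (simp add: dist_real_def)
    qed
  qed
  have "is_polynomial_fun s"
    by (rule poly_limit[where f="\<lambda>n. Dk (hh n) k (S k)" and k=k and c=c and s=s]) (use fe lim in auto)
  then show False using np by blast
qed

lemma approx_monomial: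
  assumes sc: "continuous_on UNIV s" and np: "\<not> is_polynomial_fun s"
  shows "approx s (\<lambda>t. t^k)"
proof -
  obtain S where S0: "S 0 = s" and Sd: "\<And>j x. (S (Suc j) has_real_derivative S j x) (at x)"
    using chain_exists[OF sc] by blast
  obtain h b0 where h: "h > 0" and b0: "Dk h k s b0 \<noteq> 0"
    using nonpoly_Dk[OF S0 sc Sd np] by blast
  define gd where "gd m = Dk h k (S (k - m))" for m
  have "approx s (\<lambda>t. t^k * gd k (0 * t + b0))"
  proof (rule mono_extract[of s gd k])
    show "approx s (gd 0)" unfolding gd_def using Dk_approx[OF S0 sc Sd h] by simp
    show "(gd m has_real_derivative gd (Suc m) x) (at x)" if "m < k" for m x
    proof -
      have e: "k - m = Suc (k - Suc m)" using that by simp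
      show ?thesis unfolding gd_def e by (rule Dk_deriv[OF Sd])
    qed
    show "continuous_on UNIV (gd m)" for m
      unfolding gd_def by (rule Dk_cont, rule chain_cont) (use sc S0 Sd in auto)
  qed simp
  then have "approx s (\<lambda>t. t^k * Dk h k s b0)" by (simp add: gd_def S0)
  from approx_scale[OF this, of "1 / Dk h k s b0"] show ?thesis using b0 by simp
qed

lemma approx_cont:
  assumes sc: "continuous_on UNIV s" and np: "\<not> is_polynomial_fun s"
    and fc: "continuous_on UNIV f"
  shows "approx s f"
proof (rule approx_limit)
  fix A B e :: real assume e: "e > 0"
  obtain g where g: "polynomial_function g" "\<forall>x\<in>{A..B}. norm (f x - g x) < e"
    using Stone_Weierstrass_polynomial_function[of "{A..B}" f e] fc e
    by (auto intro: continuous_on_subset)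
  then have "real_polynomial_function g" by (simp add: real_polynomial_function_eq)
  then obtain a n where gs: "g = (\<lambda>x. \<Sum>i\<le>n. a i * x^i)" by (auto simp: real_polynomial_function_iff_sum)
  have "approx s (\<lambda>x. \<Sum>i<Suc n. a i * x^i)"
    by (intro approx_sum approx_scale approx_monomial sc np)
  then have "approx s g" by (simp add: gs lessThan_Suc_atMost)
  then show "\<exists>g. approx s g \<and> (\<forall>t\<in>{A..B}. \<bar>f t - g t\<bar> \<le> e)"
    using g(2) by (intro exI[of _ g]) (auto simp: less_imp_le)
qed



lemma sum_list_concat_upt:
  "sum_list (map T (concat (map g [0..<n]))) = (\<Sum>i<n. sum_list (map T (g i)))"
  by (induction n) auto

lemma net_term:
  fixes a :: "real ^ 'd"
  shows "sum_list (map (\<lambda>q. (fst (snd (snd q)) * s (fst (snd (snd (snd q))) * (fst q \<bullet> x + fst (snd q)) + snd (snd (snd (snd q))))) *\<^sub>R fst q)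
           (map (\<lambda>(u, v, \<beta>). (a, b, u, v, \<beta>)) ps)) = net s ps (a \<bullet> x + b) *\<^sub>R a"
  by (induction ps) (auto simp: net_def scaleR_left_distrib)

lemma unit_cube_bound:
  fixes a x :: "real ^ 'd"
  assumes "x \<in> unit_cube"
  shows "\<bar>a \<bullet> x + b\<bar> \<le> norm a * CARD('d) + \<bar>b\<bar>"
proof -
  have "norm x \<le> (\<Sum>i\<in>UNIV. \<bar>x$i\<bar>)" by (rule norm_le_l1_cart)
  also have "\<dots> \<le> (\<Sum>i\<in>(UNIV::'d set). 1)"
    using assms by (intro sum_mono) (auto simp: unit_cube_def)
  finally have nx: "norm x \<le> CARD('d)" by simp
  have "\<bar>a \<bullet> x\<bar> \<le> norm a * norm x" by (rule Cauchy_Schwarz_ineq2)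
  also have "\<dots> \<le> norm a * CARD('d)" using nx by (intro mult_left_mono) auto
  finally show ?thesis by linarith
qed

lemma uc0: "(0::real^'d) \<in> unit_cube" by (simp add: unit_cube_def)
lemma ucne: "(unit_cube :: (real^'d) set) \<noteq> {}" using uc0 by blast

theorem theorem3:
  fixes s :: "real \<Rightarrow> real"
    and F :: "real ^ 'd \<Rightarrow> real"
    and gradF :: "real ^ 'd \<Rightarrow> real ^ 'd"
    and N :: nat
    and a :: "nat \<Rightarrow> real ^ 'd"
    and b :: "nat \<Rightarrow> real"
    and \<psi> :: "nat \<Rightarrow> real \<Rightarrow> real"
    and \<epsilon> :: real
  assumes s_cont: "continuous_on UNIV s"
    and s_nonpoly: "\<not> is_polynomial_fun s"
    and N_pos: "N \<ge> 1"
    and psi_C1: "\<And>i. i < N \<Longrightarrow> \<psi> i C1_differentiable_on UNIV"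
    and F_def: "\<And>x. F x = (\<Sum>i<N. \<psi> i (a i \<bullet> x + b i))"
    and F_grad: "\<And>x. (F has_derivative (\<lambda>h. gradF x \<bullet> h)) (at x)"
    and eps_pos: "\<epsilon> > 0"
  shows "\<exists>M w c u v \<beta>. M \<ge> 1 \<and>
           (SUP x\<in>unit_cube. norm (gradF x - grad_net s M w c u v \<beta> x)) < \<epsilon> \<and>
           continuous_on UNIV (grad_net s M w c u v \<beta>) \<and>
           (\<exists>\<Phi> :: real ^ 'd \<Rightarrow> real.
              \<forall>x. (\<Phi> has_derivative (\<lambda>h. grad_net s M w c u v \<beta> x \<bullet> h)) (at x))"
proof -
  have "\<forall>i. \<exists>D. i < N \<longrightarrow> (\<forall>x. (\<psi> i has_vector_derivative D x) (at x)) \<and> continuous_on UNIV D"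
    using psi_C1 unfolding C1_differentiable_on_def by blast
  then obtain D where Dd: "\<And>i x. i < N \<Longrightarrow> (\<psi> i has_vector_derivative D i x) (at x)"
    and Dc: "\<And>i. i < N \<Longrightarrow> continuous_on UNIV (D i)"
    by metis
  define G where "G x = (\<Sum>i<N. D i (a i \<bullet> x + b i) *\<^sub>R a i)" for x
  have gradG: "gradF x = G x" for x
  proof -
    have "((\<lambda>x. \<Sum>i<N. \<psi> i (a i \<bullet> x + b i)) has_derivative (\<lambda>h. \<Sum>i<N. (a i \<bullet> h) *\<^sub>R D i (a i \<bullet> x + b i))) (at x)"
    proof (rule has_derivative_sum)
      fix i assume "i \<in> {..<N}"
      then have d: "(\<psi> i has_derivative (\<lambda>y. y *\<^sub>R D i (a i \<bullet> x + b i))) (at (a i \<bullet> x + b i))"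
        using Dd unfolding has_vector_derivative_def by auto
      have l: "((\<lambda>x. a i \<bullet> x + b i) has_derivative (\<lambda>h. a i \<bullet> h)) (at x)"
        by (auto intro!: derivative_eq_intros)
      show "((\<lambda>x. \<psi> i (a i \<bullet> x + b i)) has_derivative (\<lambda>h. (a i \<bullet> h) *\<^sub>R D i (a i \<bullet> x + b i))) (at x)"
        using has_derivative_compose[OF l d] .
    qed
    have "(F has_derivative (\<lambda>h. \<Sum>i<N. (a i \<bullet> h) *\<^sub>R D i (a i \<bullet> x + b i))) (at x)"
    proof -
      have "F = (\<lambda>x. \<Sum>i<N. \<psi> i (a i \<bullet> x + b i))" by (rule ext) (rule F_def)
      then show ?thesis using \<open>((\<lambda>x. \<Sum>i<N. \<psi> i (a i \<bullet> x + b i)) has_derivative _) _\<close> by simp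
    qed
    from has_derivative_unique[OF F_grad this]
    have fe: "(\<lambda>h. gradF x \<bullet> h) = (\<lambda>h. \<Sum>i<N. (a i \<bullet> h) *\<^sub>R D i (a i \<bullet> x + b i))" .
    have "G x \<bullet> h = (\<Sum>i<N. (a i \<bullet> h) *\<^sub>R D i (a i \<bullet> x + b i))" for h
      unfolding G_def inner_sum_left by (rule sum.cong) auto
    then have "gradF x \<bullet> h = G x \<bullet> h" for h using fun_cong[OF fe, of h] by simp
    then have "(gradF x - G x) \<bullet> (gradF x - G x) = 0" by (simp add: inner_diff_left)
    then show ?thesis by simp
  qed
  define R where "R i = norm (a i) * CARD('d) + \<bar>b i\<bar>" for i
  define K where "K = (\<Sum>i<N. norm (a i)) + 1"
  have K0: "K > 0" unfolding K_def by (simp add: add_nonneg_pos sum_nonneg)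
  define \<delta> where "\<delta> = \<epsilon> / (2 * K)"
  have d0: "\<delta> > 0" using K0 eps_pos by (simp add: \<delta>_def)
  have "\<forall>i. \<exists>ps. i < N \<longrightarrow> (\<forall>t\<in>{-R i..R i}. \<bar>D i t - net s ps t\<bar> < \<delta>)"
  proof (intro allI)
    fix i show "\<exists>ps. i < N \<longrightarrow> (\<forall>t\<in>{-R i..R i}. \<bar>D i t - net s ps t\<bar> < \<delta>)"
    proof (cases "i < N")
      case True
      then have "approx s (D i)" by (intro approx_cont s_cont s_nonpoly Dc)
      then show ?thesis using d0 unfolding approx_def by blast
    qed simp
  qed
  then obtain ps where ps: "\<And>i t. i < N \<Longrightarrow> t \<in> {-R i..R i} \<Longrightarrow> \<bar>D i t - net s (ps i) t\<bar> < \<delta>"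
    by metis
  define L :: "((real^'d) \<times> real \<times> real \<times> real \<times> real) list" where
    "L = (0, 0, 0, 0, 0) # concat (map (\<lambda>i. map (\<lambda>(u, v, \<beta>). (a i, b i, u, v, \<beta>)) (ps i)) [0..<N])"
  define M where "M = length L"
  define w where "w j = fst (L!j)" for j
  define c where "c j = fst (snd (L!j))" for j
  define u where "u j = fst (snd (snd (L!j)))" for j
  define v where "v j = fst (snd (snd (snd (L!j))))" for j
  define \<beta> where "\<beta> j = snd (snd (snd (snd (L!j))))" for j
  define T where "T x q = (fst (snd (snd q)) * s (fst (snd (snd (snd q))) * (fst q \<bullet> x + fst (snd q)) + snd (snd (snd (snd q))))) *\<^sub>R fst q" for x and q :: "(real^'d) \<times> real \<times> real \<times> real \<times> real"
  have gn: "grad_net s M w c u v \<beta> x = (\<Sum>i<N. net s (ps i) (a i \<bullet> x + b i) *\<^sub>R a i)" for x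
  proof -
    have "grad_net s M w c u v \<beta> x = (\<Sum>j<length L. T x (L!j))"
      by (simp add: grad_net_def M_def T_def w_def c_def u_def v_def \<beta>_def)
    also have "\<dots> = sum_list (map (T x) L)"
      by (simp add: sum_list_sum_nth atLeast0LessThan)
    also have "\<dots> = (\<Sum>i<N. net s (ps i) (a i \<bullet> x + b i) *\<^sub>R a i)"
    proof -
      have nt: "sum_list (map (T x \<circ> (\<lambda>(u, v, \<beta>). (a i, b i, u, v, \<beta>))) (ps i)) = net s (ps i) (a i \<bullet> x + b i) *\<^sub>R a i" for i
        using net_term[of s x "a i" "b i" "ps i"] by (simp add: T_def[abs_def] comp_def)
      show ?thesis unfolding L_def by (simp add: T_def sum_list_concat_upt nt)
    qed
    finally show ?thesis .
  qed
  have M1: "M \<ge> 1" by (simp add: M_def L_def)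
  have bound: "norm (gradF x - grad_net s M w c u v \<beta> x) \<le> \<epsilon> / 2" if x: "x \<in> unit_cube" for x
  proof -
    have "gradF x - grad_net s M w c u v \<beta> x = (\<Sum>i<N. (D i (a i \<bullet> x + b i) - net s (ps i) (a i \<bullet> x + b i)) *\<^sub>R a i)"
      by (simp add: gradG G_def gn sum_subtractf scaleR_diff_left)
    also have "norm \<dots> \<le> (\<Sum>i<N. norm ((D i (a i \<bullet> x + b i) - net s (ps i) (a i \<bullet> x + b i)) *\<^sub>R a i))"
      by (rule norm_sum)
    also have "\<dots> \<le> (\<Sum>i<N. \<delta> * norm (a i))"
    proof (rule sum_mono)
      fix i assume i: "i \<in> {..<N}"
      have "\<bar>a i \<bullet> x + b i\<bar> \<le> R i" unfolding R_def by (rule unit_cube_bound[OF x])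
      then have "\<bar>D i (a i \<bullet> x + b i) - net s (ps i) (a i \<bullet> x + b i)\<bar> < \<delta>"
        using ps[of i "a i \<bullet> x + b i"] i \<open>\<bar>a i \<bullet> x + b i\<bar> \<le> R i\<close>
        by (simp add: abs_le_iff)
      then show "norm ((D i (a i \<bullet> x + b i) - net s (ps i) (a i \<bullet> x + b i)) *\<^sub>R a i) \<le> \<delta> * norm (a i)"
        unfolding norm_scaleR real_norm_def by (intro mult_right_mono) auto
    qed
    also have "\<dots> = \<delta> * (K - 1)" by (simp add: K_def sum_distrib_left)
    also have "\<dots> \<le> \<delta> * K" using d0 by simp
    also have "\<dots> = \<epsilon> / 2" using K0 by (simp add: \<delta>_def)
    finally show ?thesis .
  qed
  have sup: "(SUP x\<in>unit_cube. norm (gradF x - grad_net s M w c u v \<beta> x)) \<le> \<epsilon> / 2"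
    by (rule cSUP_least[OF ucne bound])
  have cs: "continuous_on UNIV (\<lambda>x::real^'d. s (v j * (w j \<bullet> x + c j) + \<beta> j))" for j
    by (rule continuous_on_compose2[OF s_cont]) (auto intro!: continuous_intros)
  have cont: "continuous_on UNIV (grad_net s M w c u v \<beta>)"
    unfolding grad_net_def[abs_def]
    by (intro continuous_on_sum continuous_on_scaleR continuous_on_mult continuous_on_const cs)
  have "\<forall>j. \<exists>Q. \<forall>t. (Q has_real_derivative s (v j * t + \<beta> j)) (at t)"
  proof
    fix j
    have "continuous_on UNIV (\<lambda>t. s (v j * t + \<beta> j))"
      by (rule continuous_on_compose2[OF s_cont]) (auto intro!: continuous_intros)
    then show "\<exists>Q. \<forall>t. (Q has_real_derivative s (v j * t + \<beta> j)) (at t)" by (rule antider)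
  qed
  from choice[OF this] obtain Q where Q: "\<And>j t. (Q j has_real_derivative s (v j * t + \<beta> j)) (at t)"
    by blast
  define \<Phi> where "\<Phi> x = (\<Sum>j<M. u j * Q j (w j \<bullet> x + c j))" for x :: "real^'d"
  have "(\<Phi> has_derivative (\<lambda>h. grad_net s M w c u v \<beta> x \<bullet> h)) (at x)" for x
  proof -
    have "(\<Phi> has_derivative (\<lambda>h. \<Sum>j<M. u j * (s (v j * (w j \<bullet> x + c j) + \<beta> j) * (w j \<bullet> h)))) (at x)"
      unfolding \<Phi>_def[abs_def]
    proof (rule has_derivative_sum)
      fix j assume "j \<in> {..<M}"
      have q: "(Q j has_derivative (\<lambda>y. s (v j * (w j \<bullet> x + c j) + \<beta> j) * y)) (at (w j \<bullet> x + c j))"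
        using Q[of j "w j \<bullet> x + c j"] by (simp add: has_field_derivative_def)
      have l: "((\<lambda>x. w j \<bullet> x + c j) has_derivative (\<lambda>h. w j \<bullet> h)) (at x)"
        by (auto intro!: derivative_eq_intros)
      have "((\<lambda>x. Q j (w j \<bullet> x + c j)) has_derivative (\<lambda>h. s (v j * (w j \<bullet> x + c j) + \<beta> j) * (w j \<bullet> h))) (at x)"
        using has_derivative_compose[OF l q] by simp
      then show "((\<lambda>x. u j * Q j (w j \<bullet> x + c j)) has_derivative (\<lambda>h. u j * (s (v j * (w j \<bullet> x + c j) + \<beta> j) * (w j \<bullet> h)))) (at x)"
        by (rule has_derivative_mult_right)
    qed
    then show ?thesis
      by (rule has_derivative_eq_rhs) (simp add: fun_eq_iff grad_net_def inner_sum_left mult.assoc)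
  qed
  then have Phi: "\<exists>\<Phi> :: real ^ 'd \<Rightarrow> real. \<forall>x. (\<Phi> has_derivative (\<lambda>h. grad_net s M w c u v \<beta> x \<bullet> h)) (at x)"
    by blast
  have supl: "(SUP x\<in>unit_cube. norm (gradF x - grad_net s M w c u v \<beta> x)) < \<epsilon>"
    using sup eps_pos by linarith
  show ?thesis
    by (rule exI[of _ M], rule exI[of _ w], rule exI[of _ c], rule exI[of _ u], rule exI[of _ v], rule exI[of _ \<beta>])
      (use M1 supl cont Phi in blast)
qed

end
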